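(* Let $n\ge3$. The functional $F_n:\mathcal A_n\to\mathbb R$ attains its maximum value at a point $[\mu]\in\mathcal A_n$ if and only if $\mu$ is isomorphic to the commutative associative algebra $\mu_{ca}$ defined on a basis $\{X_1,\dots,X_n\}$ by $\mu_{ca}(X_1,X_1)=X_2$ (all other products of basis vectors zero). In this case $F_n([\mu])=20$.
   Context: $V_n$ is the space of bilinear maps $\mu:\mathbb C^n\times\mathbb C^n\to\mathbb C^n$ with standard Hermitian structures; $\mathcal A_n\subset\mathbb PV_n$ is the projectivization of the algebraic set of associative $\mu\in V_n$. $L^\mu_XY=\mu(X,Y)$, $R^\mu_XY=\mu(Y,X)$, $\mathrm M_\mu=2\sum_i L^\mu_{X_i}(L^\mu_{X_i})^*-2\sum_i (L^\mu_{X_i})^*L^\mu_{X_i}-2\sum_i (R^\mu_{X_i})^*R^\mu_{X_i}$ ($\{X_i\}$ orthonormal), $\|\mu\|^2=\sum_{i,j}\|\mu(X_i,X_j)\|^2$, $F_n([\mu])=\operatorname{tr}\mathrm M_\mu^2/\|\mu\|^4$. Isomorphism of algebras means lying in the same $\mathrm{GL}(n)$-orbit under $g.\mu(X,Y)=g\mu(g^{-1}X,g^{-1}Y)$. *)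

theory Defs
  imports "HOL-Analysis.Analysis"
begin

text \<open>An element mu of V_n (a complex bilinear map C^n x C^n -> C^n) is encoded by its
structure constants w.r.t. the standard (orthonormal) basis e_i of C^n:
mu i j k is the k-th coordinate of mu(e_i, e_j).  The index type 'n has CARD('n) = n.\<close>

type_synonym 'n alg = "'n \<Rightarrow> 'n \<Rightarrow> 'n \<Rightarrow> complex"

definition bil :: "'n::finite alg \<Rightarrow> complex^'n \<Rightarrow> complex^'n \<Rightarrow> complex^'n" where
  "bil mu x y = (\<chi> k. \<Sum>i\<in>UNIV. \<Sum>j\<in>UNIV. x$i * y$j * mu i j k)"

definition associative :: "'n::finite alg \<Rightarrow> bool" where
  "associative mu \<longleftrightarrow> (\<forall>x y z. bil mu (bil mu x y) z = bil mu x (bil mu y z))"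

definition norm2 :: "'n::finite alg \<Rightarrow> real" where
  "norm2 mu = (\<Sum>i\<in>UNIV. \<Sum>j\<in>UNIV. (norm (bil mu (axis i 1) (axis j 1)))^2)"

definition adj :: "complex^'n^'n \<Rightarrow> complex^'n^'n" where
  "adj A = (\<chi> r c. cnj (A$c$r))"

definition Lmat :: "'n::finite alg \<Rightarrow> 'n \<Rightarrow> complex^'n^'n" where
  "Lmat mu i = (\<chi> k j. mu i j k)"

definition Rmat :: "'n::finite alg \<Rightarrow> 'n \<Rightarrow> complex^'n^'n" where
  "Rmat mu i = (\<chi> k j. mu j i k)"


definition Mmu :: "'n::finite alg \<Rightarrow> complex^'n^'n" where
  "Mmu mu = 2 *\<^sub>R (\<Sum>i\<in>UNIV. Lmat mu i ** adj (Lmat mu i))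
          - 2 *\<^sub>R (\<Sum>i\<in>UNIV. adj (Lmat mu i) ** Lmat mu i)
          - 2 *\<^sub>R (\<Sum>i\<in>UNIV. adj (Rmat mu i) ** Rmat mu i)"

text \<open>F_n([mu]) = tr(M_mu^2) / ||mu||^4 (M_mu is Hermitian, so the trace is real).\<close>
definition Ffun :: "'n::finite alg \<Rightarrow> real" where
  "Ffun mu = Re (trace (Mmu mu ** Mmu mu)) / (norm2 mu)^2"

text \<open>Action of g in GL(n): (g.mu)(X,Y) = g mu(g^{-1}X, g^{-1}Y); isomorphism = same orbit.\<close>
definition isomorphic :: "'n::finite alg \<Rightarrow> 'n alg \<Rightarrow> bool" where
  "isomorphic mu nu \<longleftrightarrow> (\<exists>g::complex^'n^'n. invertible g \<and>
      (\<forall>X Y. g *v bil mu (matrix_inv g *v X) (matrix_inv g *v Y) = bil nu X Y))"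

text \<open>mu_ca on a basis where X_1 = e_a, X_2 = e_b (a \<noteq> b): mu(X_1,X_1) = X_2, others zero.\<close>
definition mu_ca :: "'n \<Rightarrow> 'n \<Rightarrow> 'n alg" where
  "mu_ca a b = (\<lambda>i j k. if i = a \<and> j = a \<and> k = b then 1 else 0)"

end

theory Submission
  imports Defs
begin


definition hip :: "('n::finite \<Rightarrow> complex) \<Rightarrow> ('n \<Rightarrow> complex) \<Rightarrow> complex" where
  "hip x y = (\<Sum>k\<in>UNIV. x k * cnj (y k))"
definition nrm2 :: "('n::finite \<Rightarrow> complex) \<Rightarrow> real" where
  "nrm2 x = (\<Sum>k\<in>UNIV. (cmod (x k))^2)"

lemma cnj_hip: "cnj (hip x y) = hip y x"
  by (simp add: hip_def mult.commute)

lemma of_real_nrm2: "complex_of_real (nrm2 x) = hip x x"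
  unfolding nrm2_def hip_def of_real_sum complex_norm_square ..

lemma hip_sq: "complex_of_real ((cmod (hip x y))^2) = hip x y * hip y x"
  by (metis complex_norm_square cnj_hip)

lemma lagrange_c:
  fixes x y :: "'n::finite \<Rightarrow> complex"
  shows "(\<Sum>k\<in>UNIV. \<Sum>l\<in>UNIV. (x k * y l - x l * y k) * cnj (x k * y l - x l * y k))
     = 2 * (hip x x * hip y y - hip x y * hip y x)"
proof -
  have e: "(x k * y l - x l * y k) * cnj (x k * y l - x l * y k)
     = (x k * cnj (x k)) * (y l * cnj (y l)) - (x k * cnj (y k)) * (y l * cnj (x l))
       - (x l * cnj (y l)) * (y k * cnj (x k)) + (x l * cnj (x l)) * (y k * cnj (y k))" for k l
    by (simp add: algebra_simps)
  have s1: "(\<Sum>k\<in>UNIV. \<Sum>l\<in>UNIV. (x k * cnj (x k)) * (y l * cnj (y l))) = hip x x * hip y y"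
    by (simp add: hip_def sum_product)
  have s2: "(\<Sum>k\<in>UNIV. \<Sum>l\<in>UNIV. (x k * cnj (y k)) * (y l * cnj (x l))) = hip x y * hip y x"
    by (simp add: hip_def sum_product)
  have s3: "(\<Sum>k\<in>UNIV. \<Sum>l\<in>UNIV. (x l * cnj (y l)) * (y k * cnj (x k))) = hip x y * hip y x"
    unfolding hip_def sum_product by (rule sum.swap)
  have s4: "(\<Sum>k\<in>UNIV. \<Sum>l\<in>UNIV. (x l * cnj (x l)) * (y k * cnj (y k))) = hip x x * hip y y"
    unfolding hip_def sum_product by (rule sum.swap)
  show ?thesis
    unfolding e using s1 s2 s3 s4
    by (simp add: sum.distrib sum_subtractf)
qed

lemma lagrange:
  fixes x y :: "'n::finite \<Rightarrow> complex"
  shows "nrm2 x * nrm2 y - (cmod (hip x y))^2 = (\<Sum>k\<in>UNIV. \<Sum>l\<in>UNIV. (cmod (x k * y l - x l * y k))^2) / 2"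
proof -
  have "complex_of_real (\<Sum>k\<in>UNIV. \<Sum>l\<in>UNIV. (cmod (x k * y l - x l * y k))^2)
     = complex_of_real (2 * (nrm2 x * nrm2 y - (cmod (hip x y))^2))"
    unfolding of_real_mult[of 2] of_real_numeral of_real_sum complex_norm_square lagrange_c of_real_diff of_real_mult of_real_nrm2 hip_sq cnj_hip ..
  then have h2: "(\<Sum>k\<in>UNIV. \<Sum>l\<in>UNIV. (cmod (x k * y l - x l * y k))^2) = 2 * (nrm2 x * nrm2 y - (cmod (hip x y))^2)"
    by (simp only: of_real_eq_iff)
  show ?thesis by (subst h2) simp
qed

lemma cs: "(cmod (hip x y))^2 \<le> nrm2 x * nrm2 y"
proof -
  have "0 \<le> (\<Sum>k\<in>UNIV. \<Sum>l\<in>UNIV. (cmod (x k * y l - x l * y k))^2) / 2"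
    by (intro divide_nonneg_pos sum_nonneg) auto
  then show ?thesis using lagrange[of x y] by linarith
qed

lemma cs_eq:
  assumes "(cmod (hip x y))^2 = nrm2 x * nrm2 y"
  shows "x k * y l = x l * y k"
proof -
  have z: "(\<Sum>k\<in>UNIV. \<Sum>l\<in>UNIV. (cmod (x k * y l - x l * y k))^2) = 0"
    using lagrange[of x y] assms by linarith
  have "(\<Sum>l\<in>UNIV. (cmod (x k * y l - x l * y k))^2) = 0"
    using z by (subst (asm) sum_nonneg_eq_0_iff) (auto intro: sum_nonneg)
  then have "(cmod (x k * y l - x l * y k))^2 = 0"
    by (subst (asm) sum_nonneg_eq_0_iff) auto
  then show ?thesis by simp
qed

lemma cs_par:
  assumes "\<And>k l. x k * y l = x l * y k"
  shows "(cmod (hip x y))^2 = nrm2 x * nrm2 y"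
proof -
  have "\<And>k l. x k * y l - x l * y k = 0" using assms by simp
  then have "(\<Sum>k\<in>UNIV. \<Sum>l\<in>UNIV. (cmod (x k * y l - x l * y k))^2) = 0" by simp
  then show ?thesis using lagrange[of x y] by simp
qed



lemma gram_pair:
  fixes u :: "'a::finite \<Rightarrow> 'n::finite \<Rightarrow> complex" and v :: "'b::finite \<Rightarrow> 'n \<Rightarrow> complex"
  shows "(\<Sum>k\<in>UNIV. \<Sum>l\<in>UNIV. (\<Sum>\<alpha>\<in>UNIV. u \<alpha> k * cnj (u \<alpha> l)) * (\<Sum>\<beta>\<in>UNIV. v \<beta> l * cnj (v \<beta> k)))
       = (\<Sum>\<alpha>\<in>UNIV. \<Sum>\<beta>\<in>UNIV. hip (u \<alpha>) (v \<beta>) * hip (v \<beta>) (u \<alpha>))"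
proof -
  define F where "F k l \<alpha> \<beta> = u \<alpha> k * cnj (u \<alpha> l) * (v \<beta> l * cnj (v \<beta> k))" for k l \<alpha> \<beta>
  have "(\<Sum>k\<in>UNIV. \<Sum>l\<in>UNIV. (\<Sum>\<alpha>\<in>UNIV. u \<alpha> k * cnj (u \<alpha> l)) * (\<Sum>\<beta>\<in>UNIV. v \<beta> l * cnj (v \<beta> k)))
     = (\<Sum>k\<in>UNIV. \<Sum>l\<in>UNIV. \<Sum>\<alpha>\<in>UNIV. \<Sum>\<beta>\<in>UNIV. F k l \<alpha> \<beta>)"
    unfolding F_def sum_product ..
  also have "\<dots> = (\<Sum>k\<in>UNIV. \<Sum>\<alpha>\<in>UNIV. \<Sum>l\<in>UNIV. \<Sum>\<beta>\<in>UNIV. F k l \<alpha> \<beta>)"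
    by (rule sum.cong[OF refl], rule sum.swap)
  also have "\<dots> = (\<Sum>\<alpha>\<in>UNIV. \<Sum>k\<in>UNIV. \<Sum>l\<in>UNIV. \<Sum>\<beta>\<in>UNIV. F k l \<alpha> \<beta>)"
    by (rule sum.swap)
  also have "\<dots> = (\<Sum>\<alpha>\<in>UNIV. \<Sum>k\<in>UNIV. \<Sum>\<beta>\<in>UNIV. \<Sum>l\<in>UNIV. F k l \<alpha> \<beta>)"
    by (rule sum.cong[OF refl], rule sum.cong[OF refl], rule sum.swap)
  also have "\<dots> = (\<Sum>\<alpha>\<in>UNIV. \<Sum>\<beta>\<in>UNIV. \<Sum>k\<in>UNIV. \<Sum>l\<in>UNIV. F k l \<alpha> \<beta>)"
    by (rule sum.cong[OF refl], rule sum.swap)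
  also have "\<dots> = (\<Sum>\<alpha>\<in>UNIV. \<Sum>\<beta>\<in>UNIV. hip (u \<alpha>) (v \<beta>) * hip (v \<beta>) (u \<alpha>))"
    unfolding hip_def sum_product F_def by (simp add: mult_ac)
  finally show ?thesis .
qed

definition Xs :: "('a::finite \<Rightarrow> 'n::finite \<Rightarrow> complex) \<Rightarrow> ('b::finite \<Rightarrow> 'n \<Rightarrow> complex) \<Rightarrow> real" where
  "Xs u v = (\<Sum>\<alpha>\<in>UNIV. \<Sum>\<beta>\<in>UNIV. (cmod (hip (u \<alpha>) (v \<beta>)))^2)"

lemma gram_pair_X: "(\<Sum>k\<in>UNIV. \<Sum>l\<in>UNIV. (\<Sum>\<alpha>\<in>UNIV. u \<alpha> k * cnj (u \<alpha> l)) * (\<Sum>\<beta>\<in>UNIV. v \<beta> l * cnj (v \<beta> k)))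
   = complex_of_real (Xs u v)"
  unfolding gram_pair Xs_def of_real_sum hip_sq ..

lemma Xs_swap: "Xs v u = Xs u v"
proof -
  have c: "cmod (hip y x) = cmod (hip x y)" for x y :: "'n::finite \<Rightarrow> complex"
    by (metis cnj_hip complex_mod_cnj)
  show ?thesis unfolding Xs_def by (subst sum.swap) (simp only: c)
qed

lemma four: "((w1::complex) - w2) * (w3 - w4) = w1 * w3 - w1 * w4 - w2 * w3 + w2 * w4"
  by (simp add: algebra_simps)

lemma sum4:
  fixes P Q R S :: "'n::finite \<Rightarrow> 'n \<Rightarrow> complex"
  shows "(\<Sum>k\<in>UNIV. \<Sum>l\<in>UNIV. P k l - Q k l - R k l + S k l)
    = (\<Sum>k\<in>UNIV. \<Sum>l\<in>UNIV. P k l) - (\<Sum>k\<in>UNIV. \<Sum>l\<in>UNIV. Q k l)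
      - (\<Sum>k\<in>UNIV. \<Sum>l\<in>UNIV. R k l) + (\<Sum>k\<in>UNIV. \<Sum>l\<in>UNIV. S k l)"
  by (simp add: sum.distrib sum_subtractf)

lemma gram:
  fixes a :: "'a::finite \<Rightarrow> 'n::finite \<Rightarrow> complex" and b :: "'b::finite \<Rightarrow> 'n \<Rightarrow> complex"
  shows "(\<Sum>k\<in>UNIV. \<Sum>l\<in>UNIV. ((\<Sum>\<alpha>\<in>UNIV. a \<alpha> k * cnj (a \<alpha> l)) - (\<Sum>\<beta>\<in>UNIV. b \<beta> k * cnj (b \<beta> l)))
       * ((\<Sum>\<alpha>\<in>UNIV. a \<alpha> l * cnj (a \<alpha> k)) - (\<Sum>\<beta>\<in>UNIV. b \<beta> l * cnj (b \<beta> k))))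
     = complex_of_real (Xs a a + Xs b b - 2 * Xs a b)"
proof -
  have "(\<Sum>k\<in>UNIV. \<Sum>l\<in>UNIV. ((\<Sum>\<alpha>\<in>UNIV. a \<alpha> k * cnj (a \<alpha> l)) - (\<Sum>\<beta>\<in>UNIV. b \<beta> k * cnj (b \<beta> l)))
       * ((\<Sum>\<alpha>\<in>UNIV. a \<alpha> l * cnj (a \<alpha> k)) - (\<Sum>\<beta>\<in>UNIV. b \<beta> l * cnj (b \<beta> k))))
    = (\<Sum>k\<in>UNIV. \<Sum>l\<in>UNIV. (\<Sum>\<alpha>\<in>UNIV. a \<alpha> k * cnj (a \<alpha> l)) * (\<Sum>\<beta>\<in>UNIV. a \<beta> l * cnj (a \<beta> k)))
     - (\<Sum>k\<in>UNIV. \<Sum>l\<in>UNIV. (\<Sum>\<alpha>\<in>UNIV. a \<alpha> k * cnj (a \<alpha> l)) * (\<Sum>\<beta>\<in>UNIV. b \<beta> l * cnj (b \<beta> k)))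
     - (\<Sum>k\<in>UNIV. \<Sum>l\<in>UNIV. (\<Sum>\<alpha>\<in>UNIV. b \<alpha> k * cnj (b \<alpha> l)) * (\<Sum>\<beta>\<in>UNIV. a \<beta> l * cnj (a \<beta> k)))
     + (\<Sum>k\<in>UNIV. \<Sum>l\<in>UNIV. (\<Sum>\<alpha>\<in>UNIV. b \<alpha> k * cnj (b \<alpha> l)) * (\<Sum>\<beta>\<in>UNIV. b \<beta> l * cnj (b \<beta> k)))"
    unfolding four by (rule sum4)
  also have "\<dots> = complex_of_real (Xs a a) - complex_of_real (Xs a b) - complex_of_real (Xs b a) + complex_of_real (Xs b b)"
    unfolding gram_pair_X[of a a] gram_pair_X[of a b] gram_pair_X[of b a] gram_pair_X[of b b] ..
  finally show ?thesis unfolding Xs_swap[of b a] by simp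
qed

lemma Xs_le: "Xs u v \<le> (\<Sum>\<alpha>\<in>UNIV. nrm2 (u \<alpha>)) * (\<Sum>\<beta>\<in>UNIV. nrm2 (v \<beta>))"
  unfolding Xs_def sum_product by (intro sum_mono cs)

lemma Xs_nonneg: "0 \<le> Xs u v"
  unfolding Xs_def by (intro sum_nonneg) auto

lemma Xs_eq:
  assumes "Xs u v = (\<Sum>\<alpha>\<in>UNIV. nrm2 (u \<alpha>)) * (\<Sum>\<beta>\<in>UNIV. nrm2 (v \<beta>))"
  shows "(cmod (hip (u \<alpha>) (v \<beta>)))^2 = nrm2 (u \<alpha>) * nrm2 (v \<beta>)"
proof -
  have z: "(\<Sum>\<alpha>\<in>UNIV. \<Sum>\<beta>\<in>UNIV. nrm2 (u \<alpha>) * nrm2 (v \<beta>) - (cmod (hip (u \<alpha>) (v \<beta>)))^2) = 0"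
    using assms unfolding Xs_def sum_product by (simp add: sum_subtractf)
  have "(\<Sum>\<beta>\<in>UNIV. nrm2 (u \<alpha>) * nrm2 (v \<beta>) - (cmod (hip (u \<alpha>) (v \<beta>)))^2) = 0"
    using z by (subst (asm) sum_nonneg_eq_0_iff) (auto intro!: sum_nonneg simp: cs)
  then have "nrm2 (u \<alpha>) * nrm2 (v \<beta>) - (cmod (hip (u \<alpha>) (v \<beta>)))^2 = 0"
    by (subst (asm) sum_nonneg_eq_0_iff) (auto simp: cs)
  then show ?thesis by simp
qed

lemma Xs_zero:
  assumes "Xs u v = 0"
  shows "hip (u \<alpha>) (v \<beta>) = 0"
proof -
  have "(\<Sum>\<beta>\<in>UNIV. (cmod (hip (u \<alpha>) (v \<beta>)))^2) = 0"
    using assms unfolding Xs_def by (subst (asm) sum_nonneg_eq_0_iff) (auto intro!: sum_nonneg)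
  then have "(cmod (hip (u \<alpha>) (v \<beta>)))^2 = 0"
    by (subst (asm) sum_nonneg_eq_0_iff) auto
  then show ?thesis by simp
qed

lemma Xs_par:
  assumes "\<And>\<alpha> \<alpha>' k l. u \<alpha> k * u \<alpha>' l = u \<alpha> l * u \<alpha>' k"
  shows "Xs u u = (\<Sum>\<alpha>\<in>UNIV. nrm2 (u \<alpha>))^2"
proof -
  have "Xs u u = (\<Sum>\<alpha>\<in>UNIV. \<Sum>\<alpha>'\<in>UNIV. nrm2 (u \<alpha>) * nrm2 (u \<alpha>'))"
    unfolding Xs_def by (intro sum.cong refl cs_par assms)
  then show ?thesis by (simp add: power2_eq_square sum_product)
qed



definition av :: "'n::finite alg \<Rightarrow> 'n \<times> 'n \<Rightarrow> 'n \<Rightarrow> complex" where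
  "av mu p k = mu (fst p) (snd p) k"
definition bv :: "'n::finite alg \<Rightarrow> bool \<times> 'n \<times> 'n \<Rightarrow> 'n \<Rightarrow> complex" where
  "bv mu p k = (if fst p then cnj (mu k (fst (snd p)) (snd (snd p))) else cnj (mu (fst (snd p)) k (snd (snd p))))"

lemma sum_pair: "(\<Sum>p\<in>UNIV. f p) = (\<Sum>i\<in>(UNIV::'a::finite set). \<Sum>j\<in>(UNIV::'b::finite set). f (i, j))"
  by (simp add: sum.cartesian_product)

lemma sum_bool: "(\<Sum>t\<in>(UNIV::bool set). f t) = f False + f True"
  by (simp add: UNIV_bool)

lemma sum_triple: "(\<Sum>p\<in>UNIV. f p) = (\<Sum>i\<in>(UNIV::'a::finite set). \<Sum>j\<in>(UNIV::'b::finite set). f (False, i, j))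
   + (\<Sum>i\<in>(UNIV::'a::finite set). \<Sum>j\<in>(UNIV::'b::finite set). f (True, i, j))"
proof -
  have "(\<Sum>p\<in>UNIV. f p) = (\<Sum>t\<in>(UNIV::bool set). \<Sum>q\<in>(UNIV::('a\<times>'b) set). f (t, q))"
    by (rule sum_pair)
  also have "\<dots> = (\<Sum>q\<in>(UNIV::('a\<times>'b) set). f (False, q)) + (\<Sum>q\<in>(UNIV::('a\<times>'b) set). f (True, q))"
    by (rule sum_bool)
  finally show ?thesis by (simp only: sum_pair[where f="\<lambda>q. f (False, q)"] sum_pair[where f="\<lambda>q. f (True, q)"])
qed

lemma Mmu_entry:
  fixes mu :: "'n::finite alg"
  shows "Mmu mu $ k $ l = 2 * ((\<Sum>\<alpha>\<in>UNIV. av mu \<alpha> k * cnj (av mu \<alpha> l)) - (\<Sum>\<beta>\<in>UNIV. bv mu \<beta> k * cnj (bv mu \<beta> l)))"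
proof -
  have 1: "(\<Sum>i\<in>UNIV. Lmat mu i ** adj (Lmat mu i)) $ k $ l = (\<Sum>\<alpha>\<in>UNIV. av mu \<alpha> k * cnj (av mu \<alpha> l))"
    by (subst sum_pair) (simp add: av_def Lmat_def adj_def matrix_matrix_mult_def)
  have 2: "(\<Sum>i\<in>UNIV. adj (Lmat mu i) ** Lmat mu i) $ k $ l = (\<Sum>i\<in>UNIV. \<Sum>r\<in>UNIV. bv mu (False, i, r) k * cnj (bv mu (False, i, r) l))"
    by (simp add: bv_def Lmat_def adj_def matrix_matrix_mult_def)
  have 3: "(\<Sum>i\<in>UNIV. adj (Rmat mu i) ** Rmat mu i) $ k $ l = (\<Sum>i\<in>UNIV. \<Sum>r\<in>UNIV. bv mu (True, i, r) k * cnj (bv mu (True, i, r) l))"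
    by (simp add: bv_def Rmat_def adj_def matrix_matrix_mult_def)
  have 4: "(\<Sum>\<beta>\<in>UNIV. bv mu \<beta> k * cnj (bv mu \<beta> l)) = (\<Sum>i\<in>UNIV. \<Sum>r\<in>UNIV. bv mu (False, i, r) k * cnj (bv mu (False, i, r) l))
     + (\<Sum>i\<in>UNIV. \<Sum>r\<in>UNIV. bv mu (True, i, r) k * cnj (bv mu (True, i, r) l))"
    by (rule sum_triple)
  have 5: "Mmu mu $ k $ l = 2 * (\<Sum>i\<in>UNIV. Lmat mu i ** adj (Lmat mu i)) $ k $ l
      - 2 * (\<Sum>i\<in>UNIV. adj (Lmat mu i) ** Lmat mu i) $ k $ l - 2 * (\<Sum>i\<in>UNIV. adj (Rmat mu i) ** Rmat mu i) $ k $ l"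
    by (simp only: Mmu_def vector_minus_component vector_scaleR_component) (simp only: scaleR_conv_of_real of_real_numeral)
  have 6: "(2::complex) * x - 2 * y - 2 * z = 2 * (x - (y + z))" for x y z by (simp add: algebra_simps)
  show ?thesis
    unfolding 5 4 1 2 3 6 ..
qed

lemma trace_Mmu:
  fixes mu :: "'n::finite alg"
  shows "trace (Mmu mu ** Mmu mu) = 4 * complex_of_real (Xs (av mu) (av mu) + Xs (bv mu) (bv mu) - 2 * Xs (av mu) (bv mu))"
proof -
  have "trace (Mmu mu ** Mmu mu) = (\<Sum>k\<in>UNIV. \<Sum>l\<in>UNIV. Mmu mu $ k $ l * Mmu mu $ l $ k)"
    by (simp add: trace_def matrix_matrix_mult_def)
  also have "\<dots> = (\<Sum>k\<in>UNIV. \<Sum>l\<in>UNIV. 4 * (((\<Sum>\<alpha>\<in>UNIV. av mu \<alpha> k * cnj (av mu \<alpha> l)) - (\<Sum>\<beta>\<in>UNIV. bv mu \<beta> k * cnj (bv mu \<beta> l)))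
       * ((\<Sum>\<alpha>\<in>UNIV. av mu \<alpha> l * cnj (av mu \<alpha> k)) - (\<Sum>\<beta>\<in>UNIV. bv mu \<beta> l * cnj (bv mu \<beta> k)))))"
  proof -
    have tt: "(2::complex) * x * (2 * y) = 4 * (x * y)" for x y by simp
    show ?thesis unfolding Mmu_entry by (intro sum.cong refl) (rule tt)
  qed
  also have "\<dots> = 4 * (\<Sum>k\<in>UNIV. \<Sum>l\<in>UNIV. (((\<Sum>\<alpha>\<in>UNIV. av mu \<alpha> k * cnj (av mu \<alpha> l)) - (\<Sum>\<beta>\<in>UNIV. bv mu \<beta> k * cnj (bv mu \<beta> l)))
       * ((\<Sum>\<alpha>\<in>UNIV. av mu \<alpha> l * cnj (av mu \<alpha> k)) - (\<Sum>\<beta>\<in>UNIV. bv mu \<beta> l * cnj (bv mu \<beta> k)))))"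
    by (simp only: sum_distrib_left)
  finally show ?thesis unfolding gram .
qed

definition S0 :: "'n::finite alg \<Rightarrow> real" where
  "S0 mu = (\<Sum>i\<in>UNIV. \<Sum>j\<in>UNIV. \<Sum>k\<in>UNIV. (cmod (mu i j k))^2)"

lemma delta2:
  fixes f :: "'n::finite \<Rightarrow> 'n \<Rightarrow> complex"
  shows "(\<Sum>ib\<in>UNIV. \<Sum>ja\<in>UNIV. (if ib = i then 1 else 0) * (if ja = j then 1 else 0) * f ib ja) = f i j"
proof -
  have e: "(if ib = i then 1 else 0) * (if ja = j then 1 else 0) * f ib ja = (if ib = i then (if ja = j then f ib ja else 0) else 0)" for ib ja
    by auto
  have "(\<Sum>ja\<in>UNIV. (if ib = i then (if ja = j then f ib ja else 0) else 0)) = (if ib = i then f i j else 0)" for ib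
    by (cases "ib = i") auto
  then show ?thesis unfolding e by simp
qed

lemma norm2_S0: "norm2 mu = S0 mu"
proof -
  have b: "bil mu (axis i 1) (axis j 1) = (\<chi> k. mu i j k)" for i j
  proof -
    have im: "(if P then (1::complex) else 0) * x = (if P then x else 0)" for P x by simp
    show ?thesis by (simp add: bil_def axis_def vec_eq_iff delta2)
  qed
  have n: "(norm (v::complex^'n))^2 = (\<Sum>k\<in>UNIV. (cmod (v $ k))^2)" for v
    by (simp add: norm_vec_def L2_set_def sum_nonneg)
  show ?thesis unfolding norm2_def S0_def b n by simp
qed

lemma sum_av: "(\<Sum>\<alpha>\<in>UNIV. nrm2 (av mu \<alpha>)) = S0 mu"
  by (subst sum_pair) (simp add: nrm2_def av_def S0_def)

lemma sum_bv: "(\<Sum>\<beta>\<in>UNIV. nrm2 (bv mu \<beta>)) = 2 * S0 mu"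
proof -
  have 1: "(\<Sum>i\<in>UNIV. \<Sum>r\<in>UNIV. nrm2 (bv mu (False, i, r))) = S0 mu"
    unfolding S0_def nrm2_def bv_def by (simp, intro sum.cong refl sum.swap)
  have 2: "(\<Sum>i\<in>UNIV. \<Sum>r\<in>UNIV. nrm2 (bv mu (True, i, r))) = S0 mu"
  proof -
    have "(\<Sum>i\<in>UNIV. \<Sum>r\<in>UNIV. nrm2 (bv mu (True, i, r))) = (\<Sum>i\<in>UNIV. \<Sum>r\<in>UNIV. \<Sum>k\<in>UNIV. (cmod (mu k i r))^2)"
      unfolding nrm2_def bv_def by simp
    also have "\<dots> = (\<Sum>i\<in>UNIV. \<Sum>k\<in>UNIV. \<Sum>r\<in>UNIV. (cmod (mu k i r))^2)"
      by (intro sum.cong refl sum.swap)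
    also have "\<dots> = S0 mu" unfolding S0_def by (rule sum.swap)
    finally show ?thesis .
  qed
  show ?thesis unfolding sum_triple[of "\<lambda>\<beta>. nrm2 (bv mu \<beta>)"] 1 2 by simp
qed

lemma S0_pos: "mu \<noteq> (\<lambda>i j k. 0) \<Longrightarrow> 0 < S0 mu"
proof -
  assume "mu \<noteq> (\<lambda>i j k. 0)"
  then obtain i j k where m: "mu i j k \<noteq> 0" by (meson ext)
  have "0 < (cmod (mu i j k))^2" using m by simp
  also have "\<dots> \<le> (\<Sum>k\<in>UNIV. (cmod (mu i j k))^2)" by (rule member_le_sum) auto
  also have "\<dots> \<le> (\<Sum>j\<in>UNIV. \<Sum>k\<in>UNIV. (cmod (mu i j k))^2)"
    by (rule member_le_sum[where f="\<lambda>j. \<Sum>k\<in>UNIV. (cmod (mu i j k))^2"]) (auto intro!: sum_nonneg)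
  also have "\<dots> \<le> S0 mu" unfolding S0_def
    by (rule member_le_sum[where f="\<lambda>i. \<Sum>j\<in>UNIV. \<Sum>k\<in>UNIV. (cmod (mu i j k))^2"]) (auto intro!: sum_nonneg)
  finally show ?thesis .
qed

lemma Ffun_formula: "Ffun mu = 4 * (Xs (av mu) (av mu) + Xs (bv mu) (bv mu) - 2 * Xs (av mu) (bv mu)) / (S0 mu)^2"
  unfolding Ffun_def trace_Mmu norm2_S0 by simp

lemma F_le: assumes "mu \<noteq> (\<lambda>i j k. 0)" shows "Ffun mu \<le> 20"
proof -
  have p: "0 < S0 mu" using S0_pos assms .
  have x1: "Xs (av mu) (av mu) \<le> (S0 mu)^2" using Xs_le[of "av mu" "av mu"] by (simp add: sum_av power2_eq_square)
  have x2: "Xs (bv mu) (bv mu) \<le> 4 * (S0 mu)^2" using Xs_le[of "bv mu" "bv mu"] by (simp add: sum_bv power2_eq_square)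
  have x3: "0 \<le> Xs (av mu) (bv mu)" by (rule Xs_nonneg)
  have "4 * (Xs (av mu) (av mu) + Xs (bv mu) (bv mu) - 2 * Xs (av mu) (bv mu)) \<le> 20 * (S0 mu)^2"
    using x1 x2 x3 unfolding distrib_left right_diff_distrib by linarith
  then show ?thesis unfolding Ffun_formula using p by (simp add: divide_le_eq)
qed



definition prodform :: "'n::finite alg \<Rightarrow> ('n \<Rightarrow> complex) \<Rightarrow> ('n \<Rightarrow> complex) \<Rightarrow> bool" where
  "prodform mu \<psi> w \<longleftrightarrow> \<psi> \<noteq> (\<lambda>_. 0) \<and> w \<noteq> (\<lambda>_. 0) \<and> (\<Sum>q\<in>UNIV. \<psi> q * w q) = 0
     \<and> (\<forall>i j k. mu i j k = \<psi> i * \<psi> j * w k)"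

lemma prodform_nz: "prodform mu \<psi> w \<Longrightarrow> mu \<noteq> (\<lambda>i j k. 0)"
proof
  assume pf: "prodform mu \<psi> w" and z: "mu = (\<lambda>i j k. 0)"
  from pf obtain p where p: "\<psi> p \<noteq> 0" unfolding prodform_def by (meson ext)
  from pf obtain k where k: "w k \<noteq> 0" unfolding prodform_def by (meson ext)
  have "mu p p k = \<psi> p * \<psi> p * w k" using pf unfolding prodform_def by blast
  then show False using z p k by simp
qed

lemma F_prod:
  assumes pf: "prodform mu \<psi> w"
  shows "Ffun mu = 20"
proof -
  have m: "mu i j k = \<psi> i * \<psi> j * w k" for i j k using pf unfolding prodform_def by blast
  have sw: "(\<Sum>q\<in>UNIV. \<psi> q * w q) = 0" using pf unfolding prodform_def by blast
  have p: "0 < S0 mu" using S0_pos prodform_nz[OF pf] .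
  have x1: "Xs (av mu) (av mu) = (S0 mu)^2"
    by (subst Xs_par) (auto simp: av_def m sum_av)
  have bvf: "bv mu \<beta> k = (if fst \<beta> then cnj (\<psi> (fst (snd \<beta>)) * w (snd (snd \<beta>))) else cnj (\<psi> (fst (snd \<beta>)) * w (snd (snd \<beta>)))) * cnj (\<psi> k)" for \<beta> k
    by (simp add: bv_def m mult_ac)
  have x2: "Xs (bv mu) (bv mu) = 4 * (S0 mu)^2"
    by (subst Xs_par) (auto simp: bvf sum_bv power2_eq_square)
  have h0: "hip (av mu \<alpha>) (bv mu \<beta>) = 0" for \<alpha> \<beta>
  proof -
    have "hip (av mu \<alpha>) (bv mu \<beta>) = (\<Sum>q\<in>UNIV. (\<psi> (fst \<alpha>) * \<psi> (snd \<alpha>) * (\<psi> (fst (snd \<beta>)) * w (snd (snd \<beta>)))) * (\<psi> q * w q))"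
      unfolding hip_def by (intro sum.cong refl) (simp add: av_def bvf m mult_ac)
    also have "\<dots> = 0" unfolding sum_distrib_left[symmetric] sw by simp
    finally show ?thesis .
  qed
  have x3: "Xs (av mu) (bv mu) = 0" unfolding Xs_def h0 by simp
  show ?thesis unfolding Ffun_formula x1 x2 x3 using p by (simp add: field_simps)
qed

lemma F20_prod:
  assumes nz: "mu \<noteq> (\<lambda>i j k. 0)" and F: "Ffun mu = 20"
  shows "\<exists>\<psi> w. prodform mu \<psi> w"
proof -
  have p: "0 < S0 mu" using S0_pos nz .
  have x1: "Xs (av mu) (av mu) \<le> (S0 mu)^2" using Xs_le[of "av mu" "av mu"] by (simp add: sum_av power2_eq_square)
  have x2: "Xs (bv mu) (bv mu) \<le> 4 * (S0 mu)^2" using Xs_le[of "bv mu" "bv mu"] by (simp add: sum_bv power2_eq_square)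
  have x3: "0 \<le> Xs (av mu) (bv mu)" by (rule Xs_nonneg)
  have e: "4 * (Xs (av mu) (av mu) + Xs (bv mu) (bv mu) - 2 * Xs (av mu) (bv mu)) = 20 * (S0 mu)^2"
    using F p unfolding Ffun_formula by (simp add: divide_eq_eq)
  have y: "Xs (bv mu) (bv mu) = (\<Sum>\<beta>\<in>UNIV. nrm2 (bv mu \<beta>)) * (\<Sum>\<beta>\<in>UNIV. nrm2 (bv mu \<beta>))"
    unfolding sum_bv using e x1 x2 x3 unfolding distrib_left right_diff_distrib power2_eq_square by linarith
  have z: "Xs (av mu) (bv mu) = 0"
    using e x1 x2 x3 unfolding distrib_left right_diff_distrib by linarith
  have par: "bv mu \<beta> k * bv mu \<beta>' l = bv mu \<beta> l * bv mu \<beta>' k" for \<beta> \<beta>' k l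
    using cs_eq[OF Xs_eq[OF y]] .
  obtain i0 j0 k0 where m0: "mu i0 j0 k0 \<noteq> 0" using nz by (meson ext)
  define y0 where "y0 = bv mu (False, i0, k0)"
  define \<psi> where "\<psi> k = cnj (y0 k)" for k
  have yp: "y0 j0 \<noteq> 0" using m0 by (simp add: y0_def bv_def)
  have pp: "\<psi> j0 \<noteq> 0" using yp by (simp add: \<psi>_def)
  have E1: "mu i k r * \<psi> j0 = mu i j0 r * \<psi> k" for i k r
  proof -
    have "bv mu (False, i, r) k * y0 j0 = bv mu (False, i, r) j0 * y0 k"
      unfolding y0_def by (rule par)
    then have "cnj (bv mu (False, i, r) k * y0 j0) = cnj (bv mu (False, i, r) j0 * y0 k)" by simp
    then show ?thesis by (simp add: bv_def \<psi>_def)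
  qed
  have E2: "mu k j r * \<psi> j0 = mu j0 j r * \<psi> k" for j k r
  proof -
    have "bv mu (True, j, r) k * y0 j0 = bv mu (True, j, r) j0 * y0 k"
      unfolding y0_def by (rule par)
    then have "cnj (bv mu (True, j, r) k * y0 j0) = cnj (bv mu (True, j, r) j0 * y0 k)" by simp
    then show ?thesis by (simp add: bv_def \<psi>_def)
  qed
  define w where "w k = mu j0 j0 k / (\<psi> j0)^2" for k
  have mf: "mu i j k = \<psi> i * \<psi> j * w k" for i j k
  proof -
    have "mu i j k * (\<psi> j0 * \<psi> j0) = (mu i j0 k * \<psi> j) * \<psi> j0"
      using E1[of i j k] by (simp add: mult_ac)
    also have "\<dots> = \<psi> j * (mu i j0 k * \<psi> j0)" by (simp add: mult_ac)
    also have "\<dots> = \<psi> j * (mu j0 j0 k * \<psi> i)" using E2[of i j0 k] by simp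
    finally have "mu i j k * (\<psi> j0 * \<psi> j0) = \<psi> j * (mu j0 j0 k * \<psi> i)" .
    then show ?thesis using pp unfolding w_def by (simp add: field_simps power2_eq_square)
  qed
  have wk: "w k0 \<noteq> 0" using m0 mf[of i0 j0 k0] by auto
  have "hip (av mu (j0, j0)) (bv mu (False, j0, k0)) = 0" using Xs_zero[OF z] .
  moreover have "hip (av mu (j0, j0)) (bv mu (False, j0, k0)) = (\<psi> j0 * \<psi> j0 * \<psi> j0 * w k0) * (\<Sum>q\<in>UNIV. \<psi> q * w q)"
    unfolding hip_def sum_distrib_left by (intro sum.cong refl) (simp add: av_def bv_def mf mult_ac)
  ultimately have sw: "(\<Sum>q\<in>UNIV. \<psi> q * w q) = 0" using pp wk by simp
  have "prodform mu \<psi> w"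
    unfolding prodform_def using mf sw pp wk by (auto dest: fun_cong)
  then show ?thesis by blast
qed



lemma bil_axis: "bil mu (axis i 1) (axis j 1) $ k = mu i j k"
proof -
  have "bil mu (axis i 1) (axis j 1) = (\<chi> k. mu i j k)"
  proof -
    have im: "(if P then (1::complex) else 0) * x = (if P then x else 0)" for P x by simp
    show ?thesis by (simp add: bil_def axis_def vec_eq_iff delta2)
  qed
  then show ?thesis by simp
qed

lemma bil_prod:
  assumes m: "\<And>i j k. mu i j k = \<psi> i * \<psi> j * w k"
  shows "bil mu x y = ((\<Sum>i\<in>UNIV. \<psi> i * x $ i) * (\<Sum>j\<in>UNIV. \<psi> j * y $ j)) *s (\<chi> k. w k)"
  unfolding bil_def m vec_eq_iff vec_lambda_beta vector_smult_component sum_product sum_distrib_right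
  by (intro allI sum.cong refl) (simp add: sum_distrib_left mult_ac)

lemma bil_ca:
  "bil (mu_ca a b) X Y = (X $ a * Y $ a) *s axis b 1"
proof -
  have inner: "(\<Sum>j\<in>UNIV. if i = a \<and> j = a then c else 0) = (if i = a then c else 0)" for i and c :: complex
    by (cases "i = a") auto
  show ?thesis by (simp add: bil_def mu_ca_def vec_eq_iff axis_def if_distrib inner cong: if_cong)
qed

lemma prod_assoc:
  assumes pf: "prodform mu \<psi> w"
  shows "associative mu"
proof -
  have m: "mu i j k = \<psi> i * \<psi> j * w k" for i j k using pf unfolding prodform_def by blast
  have sw: "(\<Sum>q\<in>UNIV. \<psi> q * w q) = 0" using pf unfolding prodform_def by blast
  have z: "(\<Sum>i\<in>UNIV. \<psi> i * (c *s (\<chi> k. w k)) $ i) = 0" for c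
  proof -
    have "(\<Sum>i\<in>UNIV. \<psi> i * (c *s (\<chi> k. w k)) $ i) = c * (\<Sum>q\<in>UNIV. \<psi> q * w q)"
      by (simp add: sum_distrib_left mult_ac)
    then show ?thesis using sw by simp
  qed
  show ?thesis unfolding associative_def bil_prod[OF m] z by simp
qed

lemma mu_ca_prod:
  assumes "a \<noteq> b"
  shows "prodform (mu_ca a b) (\<lambda>i. if i = a then 1 else 0) (\<lambda>k. if k = b then 1 else 0)"
proof -
  have "(\<Sum>q\<in>UNIV. (if q = a then 1 else 0) * (if q = b then 1 else 0)) = (0::complex)"
    using assms by (intro sum.neutral) auto
  then show ?thesis unfolding prodform_def using assms
    by (auto simp: mu_ca_def fun_eq_iff)
qed

lemma inv_facts:
  fixes g :: "complex^'n::finite^'n"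
  assumes "invertible g"
  shows "g ** matrix_inv g = mat 1 \<and> matrix_inv g ** g = mat 1"
  using assms unfolding invertible_def matrix_inv_def by (rule someI_ex)

lemma iso_prod:
  fixes mu :: "'n::finite alg"
  assumes ab: "a \<noteq> b" and iso: "isomorphic mu (mu_ca a b)"
  shows "\<exists>\<psi> w. prodform mu \<psi> w"
proof -
  obtain g :: "complex^'n^'n" where gi: "invertible g"
    and h: "\<And>X Y. g *v bil mu (matrix_inv g *v X) (matrix_inv g *v Y) = bil (mu_ca a b) X Y"
    using iso unfolding isomorphic_def by blast
  define gi where "gi = matrix_inv g"
  have i1: "g ** gi = mat 1" and i2: "gi ** g = mat 1" using inv_facts[OF gi] unfolding gi_def by auto
  have gv: "gi *v (g *v x) = x" for x by (simp add: matrix_vector_mul_assoc i2)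
  have vg: "g *v (gi *v x) = x" for x by (simp add: matrix_vector_mul_assoc i1)
  have hb: "bil mu x y = ((g *v x) $ a * (g *v y) $ a) *s (gi *v axis b 1)" for x y
  proof -
    have "g *v bil mu x y = ((g *v x) $ a * (g *v y) $ a) *s axis b 1"
      using h[of "g *v x" "g *v y"] unfolding gi_def[symmetric] gv bil_ca .
    then have "gi *v (g *v bil mu x y) = gi *v (((g *v x) $ a * (g *v y) $ a) *s axis b 1)" by simp
    then show ?thesis unfolding gv vector_scalar_commute .
  qed
  define \<psi> where "\<psi> i = g $ a $ i" for i
  define w where "w k = (gi *v axis b 1) $ k" for k
  have ga: "(g *v axis i 1) $ a = g $ a $ i" for i
    by (simp add: matrix_vector_mult_def axis_def if_distrib cong: if_cong)
  have mf: "mu i j k = \<psi> i * \<psi> j * w k" for i j k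
    using bil_axis[of mu i j k] unfolding hb ga by (simp add: \<psi>_def w_def)
  have sw: "(\<Sum>q\<in>UNIV. \<psi> q * w q) = 0"
  proof -
    have "(\<Sum>q\<in>UNIV. \<psi> q * w q) = (g *v (gi *v axis b 1)) $ a"
      by (simp add: \<psi>_def w_def matrix_vector_mult_def)
    also have "\<dots> = 0" unfolding vg using ab by (simp add: axis_def)
    finally show ?thesis .
  qed
  have wnz: "w \<noteq> (\<lambda>_. 0)"
  proof
    assume "w = (\<lambda>_. 0)"
    then have "gi *v axis b 1 = 0" by (simp add: w_def fun_eq_iff vec_eq_iff)
    then have "axis b (1::complex) = 0" using vg[of "axis b 1"] by simp
    then show False by (simp add: axis_eq_0_iff)
  qed
  have pnz: "\<psi> \<noteq> (\<lambda>_. 0)"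
  proof
    assume "\<psi> = (\<lambda>_. 0)"
    then have "(g *v x) $ a = 0" for x by (simp add: \<psi>_def fun_eq_iff matrix_vector_mult_def)
    then have "(axis a (1::complex)) $ a = 0" using vg[of "axis a 1"] by metis
    then show False by (simp add: axis_def)
  qed
  have "prodform mu \<psi> w" unfolding prodform_def using mf sw wnz pnz by blast
  then show ?thesis by blast
qed



lemma prod_iso:
  fixes mu :: "'n::finite alg"
  assumes pf: "prodform mu \<psi> w"
  shows "\<exists>a b. a \<noteq> b \<and> isomorphic mu (mu_ca a b)"
proof -
  have m: "mu i j k = \<psi> i * \<psi> j * w k" for i j k using pf unfolding prodform_def by blast
  have sw: "(\<Sum>q\<in>UNIV. \<psi> q * w q) = 0" using pf unfolding prodform_def by blast
  obtain a where pa: "\<psi> a \<noteq> 0" using pf unfolding prodform_def by (meson ext)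
  obtain b where ba: "b \<noteq> a" and wb: "w b \<noteq> 0"
  proof (rule ccontr)
    assume "\<not> thesis"
    then have wz: "\<And>b. b \<noteq> a \<Longrightarrow> w b = 0" using that by blast
    have "(\<Sum>q\<in>UNIV. \<psi> q * w q) = (\<Sum>q\<in>UNIV. if q = a then \<psi> a * w a else 0)"
      by (intro sum.cong refl) (auto simp: wz)
    then have "\<psi> a * w a = 0" using sw by simp
    then have "w a = 0" using pa by simp
    then have "w = (\<lambda>_. 0)" using wz by (metis ext)
    then show False using pf unfolding prodform_def by blast
  qed
  define Kf where "Kf r c = (if c = b then w r else if c = a then (if r = a then 1 / \<psi> a else 0)
      else (if r = c then 1 else 0) - (if r = a then \<psi> c / \<psi> a else 0))" for r c
  define K :: "complex^'n^'n" where "K = (\<chi> r c. Kf r c)"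
  have K1: "K *v axis b 1 = (\<chi> k. w k)"
  proof -
    have "(\<Sum>c\<in>UNIV. Kf r c * (if c = b then 1 else 0)) = Kf r b" for r
    proof -
      have "(\<Sum>c\<in>UNIV. Kf r c * (if c = b then 1 else 0)) = (\<Sum>c\<in>UNIV. if c = b then Kf r b else 0)"
        by (intro sum.cong refl) auto
      then show ?thesis by simp
    qed
    then show ?thesis by (simp add: K_def matrix_vector_mult_def axis_def vec_eq_iff Kf_def)
  qed
  have col: "(\<Sum>r\<in>UNIV. \<psi> r * Kf r c) = (if c = a then 1 else 0)" for c
  proof (cases "c = b")
    case True
    then show ?thesis using sw ba by (simp add: Kf_def)
  next
    case cb: False
    show ?thesis
    proof (cases "c = a")
      case True
      have "(\<Sum>r\<in>UNIV. \<psi> r * Kf r c) = (\<Sum>r\<in>UNIV. if r = a then \<psi> a * (1 / \<psi> a) else 0)"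
        by (intro sum.cong refl) (auto simp: Kf_def True ba[symmetric])
      then show ?thesis using pa True by simp
    next
      case ca: False
      have "(\<Sum>r\<in>UNIV. \<psi> r * Kf r c) = (\<Sum>r\<in>UNIV. (if r = c then \<psi> c else 0) - (if r = a then \<psi> a * (\<psi> c / \<psi> a) else 0))"
        by (intro sum.cong refl) (auto simp: Kf_def cb ca right_diff_distrib)
      also have "\<dots> = \<psi> c - \<psi> a * (\<psi> c / \<psi> a)" by (simp add: sum_subtractf)
      also have "\<dots> = 0" using pa by simp
      finally show ?thesis using ca by simp
    qed
  qed
  have K2: "(\<Sum>r\<in>UNIV. \<psi> r * (K *v z) $ r) = z $ a" for z
  proof -
    have "(\<Sum>r\<in>UNIV. \<psi> r * (K *v z) $ r) = (\<Sum>r\<in>UNIV. \<Sum>c\<in>UNIV. \<psi> r * Kf r c * z $ c)"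
      by (simp add: K_def matrix_vector_mult_def sum_distrib_left mult_ac)
    also have "\<dots> = (\<Sum>c\<in>UNIV. \<Sum>r\<in>UNIV. \<psi> r * Kf r c * z $ c)" by (rule sum.swap)
    also have "\<dots> = (\<Sum>c\<in>UNIV. (\<Sum>r\<in>UNIV. \<psi> r * Kf r c) * z $ c)" by (simp add: sum_distrib_right)
    also have "\<dots> = (\<Sum>c\<in>UNIV. if c = a then z $ a else 0)" unfolding col by (intro sum.cong refl) auto
    finally show ?thesis by simp
  qed
  have K3: "z = 0" if kz: "K *v z = 0" for z
  proof -
    have za: "z $ a = 0" using K2[of z] kz by simp
    have row: "(K *v z) $ r = w r * z $ b + (if r = b then 0 else z $ r)" if ra: "r \<noteq> a" for r
    proof -
      have "Kf r c * z $ c = (if c = b then w r * z $ b else 0) + (if c = r then (if r = b then 0 else z $ r) else 0)" for c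
        using ra za by (auto simp: Kf_def)
      then have "(K *v z) $ r = (\<Sum>c\<in>UNIV. (if c = b then w r * z $ b else 0) + (if c = r then (if r = b then 0 else z $ r) else 0))"
        by (simp add: K_def matrix_vector_mult_def)
      then show ?thesis by (simp add: sum.distrib)
    qed
    have zb: "z $ b = 0" using row[OF ba] kz wb by simp
    have "z $ r = 0" for r
      using za zb row[of r] kz by (cases "r = a"; cases "r = b") auto
    then show ?thesis by (simp add: vec_eq_iff)
  qed
  have invK: "invertible K"
    unfolding invertible_left_inverse matrix_left_invertible_ker using K3 by blast
  define g where "g = matrix_inv K"
  have kg1: "K ** g = mat 1" and kg2: "g ** K = mat 1" using inv_facts[OF invK] unfolding g_def by auto
  have invg: "invertible g" unfolding invertible_def using kg1 kg2 by blast
  have gg: "matrix_inv g = K"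
  proof -
    have i1: "g ** matrix_inv g = mat 1" and i2: "matrix_inv g ** g = mat 1" using inv_facts[OF invg] by auto
    have "matrix_inv g = matrix_inv g ** (g ** K)" using kg2 by simp
    also have "\<dots> = (matrix_inv g ** g) ** K" by (rule matrix_mul_assoc)
    also have "\<dots> = K" using i2 by simp
    finally show ?thesis .
  qed
  have "isomorphic mu (mu_ca a b)"
    unfolding isomorphic_def
  proof (intro exI conjI allI)
    show "invertible g" by (rule invg)
    fix X Y :: "complex^'n"
    have bk: "bil mu (K *v X) (K *v Y) = (X $ a * Y $ a) *s (K *v axis b 1)"
      unfolding bil_prod[OF m] K2 K1 ..
    show "g *v bil mu (matrix_inv g *v X) (matrix_inv g *v Y) = bil (mu_ca a b) X Y"
    proof -
      have e1: "g *v (K *v axis b 1) = axis b (1::complex)"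
        by (simp add: matrix_vector_mul_assoc kg2)
      have "g *v ((X $ a * Y $ a) *s (K *v axis b 1)) = (X $ a * Y $ a) *s (g *v (K *v axis b 1))"
        by (rule vector_scalar_commute)
      then show ?thesis unfolding gg bk bil_ca e1 .
    qed
  qed
  then have "a \<noteq> b \<and> isomorphic mu (mu_ca a b)" using ba by simp
  then show ?thesis by (intro exI)
qed



theorem theorem4p9:
  fixes mu :: "'n::finite alg"
  assumes n3: "CARD('n) \<ge> 3"
    and mu_A: "associative mu" and mu_nz: "mu \<noteq> (\<lambda>i j k. 0)"
  shows "((\<forall>nu::'n alg. associative nu \<and> nu \<noteq> (\<lambda>i j k. 0) \<longrightarrow> Ffun nu \<le> Ffun mu)
           \<longleftrightarrow> (\<exists>a b. a \<noteq> b \<and> isomorphic mu (mu_ca a b)))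
         \<and> ((\<exists>a b. a \<noteq> b \<and> isomorphic mu (mu_ca a b)) \<longrightarrow> Ffun mu = 20)"
proof -
  have IsoF: "Ffun mu = 20" if iso0: "\<exists>a b. a \<noteq> b \<and> isomorphic mu (mu_ca a b)"
  proof -
    obtain a b where ab: "a \<noteq> b" and i: "isomorphic mu (mu_ca a b)" using iso0 by (elim exE conjE)
    obtain \<psi> w where "prodform mu \<psi> w" using iso_prod[OF ab i] by (elim exE)
    then show ?thesis by (rule F_prod)
  qed
  have two: "\<exists>a b::'n. a \<noteq> b"
  proof (rule ccontr)
    assume "\<not> (\<exists>a b::'n. a \<noteq> b)"
    then have u: "(UNIV::'n set) = {undefined}" by auto
    have "CARD('n) = card {undefined::'n}" by (subst u) (rule refl)
    then have "CARD('n) = 1" by simp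
    with n3 show False by simp
  qed
  have fwd: "\<exists>a b. a \<noteq> b \<and> isomorphic mu (mu_ca a b)"
    if mx: "\<forall>nu::'n alg. associative nu \<and> nu \<noteq> (\<lambda>i j k. 0) \<longrightarrow> Ffun nu \<le> Ffun mu"
  proof -
    obtain a b :: 'n where ab: "a \<noteq> b" using two by (elim exE)
    have pf: "prodform (mu_ca a b) (\<lambda>i. if i = a then 1 else 0) (\<lambda>k. if k = b then 1 else 0)"
      using mu_ca_prod[OF ab] .
    have "Ffun (mu_ca a b) \<le> Ffun mu"
      using mx prod_assoc[OF pf] prodform_nz[OF pf] by simp
    moreover have "Ffun (mu_ca a b) = 20" using F_prod[OF pf] .
    moreover have "Ffun mu \<le> 20" using F_le[OF mu_nz] .
    ultimately have "Ffun mu = 20" by linarith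
    then have "\<exists>\<psi> w. prodform mu \<psi> w" by (rule F20_prod[OF mu_nz])
    then obtain \<psi> w where "prodform mu \<psi> w" by (elim exE)
    then show ?thesis by (rule prod_iso)
  qed
  have bwd: "\<forall>nu::'n alg. associative nu \<and> nu \<noteq> (\<lambda>i j k. 0) \<longrightarrow> Ffun nu \<le> Ffun mu"
    if iso: "\<exists>a b. a \<noteq> b \<and> isomorphic mu (mu_ca a b)"
    using IsoF[OF iso] F_le by auto
  show ?thesis
  proof (intro conjI iffI impI)
    show "\<exists>a b. a \<noteq> b \<and> isomorphic mu (mu_ca a b)"
      if "\<forall>nu::'n alg. associative nu \<and> nu \<noteq> (\<lambda>i j k. 0) \<longrightarrow> Ffun nu \<le> Ffun mu"
      using fwd[OF that] .
    show "\<forall>nu::'n alg. associative nu \<and> nu \<noteq> (\<lambda>i j k. 0) \<longrightarrow> Ffun nu \<le> Ffun mu"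
      if "\<exists>a b. a \<noteq> b \<and> isomorphic mu (mu_ca a b)"
      using bwd[OF that] .
    show "Ffun mu = 20" if "\<exists>a b. a \<noteq> b \<and> isomorphic mu (mu_ca a b)"
      using IsoF[OF that] .
  qed
qed


end
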